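(* Let $G$ be an $r$-graph on $n$ vertices, let $L>r$ be an integer, and let $0\le k<r$ be the residue of $L$ modulo $r$. If $G$ is $C_L^{(r)}$-hom-free, then one can delete at most $2rL^{-1/r}n^r$ edges from $G$ so that the resulting $r$-graph $G'$ is $\mathscr C_k^{(r)}$-hom-free.
   Context: An $r$-graph is an $r$-uniform hypergraph. For $\ell>r$, the tight cycle $C_\ell^{(r)}$ has vertices $v_1,\dots,v_\ell$ and edges $\{v_i,\dots,v_{i+r-1}\}$, $1\le i\le\ell$ (indices mod $\ell$). A homomorphism $F\to G$ maps $V(F)\to V(G)$ sending each edge of $F$ onto an edge of $G$; $G$ is $F$-hom-free if none exists, and $\mathscr C_k^{(r)}$-hom-free if it is $C_\ell^{(r)}$-hom-free for all $\ell>r$ with $\ell\equiv k\pmod r$. *)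

theory Defs
  imports Complex_Main
begin

type_synonym 'a hgraph = "'a set \<times> 'a set set"

definition uniform_hgraph :: "nat \<Rightarrow> 'a hgraph \<Rightarrow> bool" where
  "uniform_hgraph r G \<longleftrightarrow> finite (fst G) \<and> (\<forall>e\<in>snd G. e \<subseteq> fst G \<and> card e = r)"

definition is_hom :: "'b hgraph \<Rightarrow> 'a hgraph \<Rightarrow> ('b \<Rightarrow> 'a) \<Rightarrow> bool" where
  "is_hom F G f \<longleftrightarrow> (\<forall>v\<in>fst F. f v \<in> fst G) \<and> (\<forall>e\<in>snd F. f ` e \<in> snd G)"

definition hom_free :: "'b hgraph \<Rightarrow> 'a hgraph \<Rightarrow> bool" where
  "hom_free F G \<longleftrightarrow> \<not> (\<exists>f. is_hom F G f)"

definition tight_cycle :: "nat \<Rightarrow> nat \<Rightarrow> nat hgraph" where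
  "tight_cycle r l = ({..<l}, {(\<lambda>j. (i + j) mod l) ` {..<r} | i. i < l})"

definition cycle_class_hom_free :: "nat \<Rightarrow> nat \<Rightarrow> 'a hgraph \<Rightarrow> bool" where
  "cycle_class_hom_free r k G \<longleftrightarrow>
     (\<forall>l. r < l \<and> l mod r = k mod r \<longrightarrow> hom_free (tight_cycle r l) G)"

end

theory Submission
  imports Defs
begin

definition tight :: "nat \<Rightarrow> 'a set set \<Rightarrow> 'a list \<Rightarrow> bool" where
 "tight r E xs \<longleftrightarrow> (\<forall>i. i + r \<le> length xs \<longrightarrow> (\<lambda>j. xs ! (i + j)) ` {..<r} \<in> E)"

definition reach :: "nat \<Rightarrow> 'a set set \<Rightarrow> nat \<Rightarrow> 'a list \<Rightarrow> 'a list \<Rightarrow> bool" where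
 "reach r E t u v \<longleftrightarrow> (\<exists>xs. length xs = t + (r - 1) \<and> tight r E xs \<and> take (r-1) xs = u \<and> drop t xs = v)"

lemma tight_take: "tight r E xs \<Longrightarrow> tight r E (take n xs)"
  unfolding tight_def
proof (intro allI impI)
  fix i assume t: "\<forall>i. i + r \<le> length xs \<longrightarrow> (\<lambda>j. xs ! (i + j)) ` {..<r} \<in> E"
    and i: "i + r \<le> length (take n xs)"
  have "(\<lambda>j. take n xs ! (i + j)) ` {..<r} = (\<lambda>j. xs ! (i + j)) ` {..<r}"
    using i by (intro image_cong) auto
  then show "(\<lambda>j. take n xs ! (i + j)) ` {..<r} \<in> E" using t i by simp
qed

lemma tight_drop: "tight r E xs \<Longrightarrow> r \<ge> 1 \<Longrightarrow> tight r E (drop n xs)"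
  unfolding tight_def
proof (intro allI impI)
  fix i assume t: "\<forall>i. i + r \<le> length xs \<longrightarrow> (\<lambda>j. xs ! (i + j)) ` {..<r} \<in> E"
    and i: "i + r \<le> length (drop n xs)"
  have "(\<lambda>j. drop n xs ! (i + j)) ` {..<r} = (\<lambda>j. xs ! ((n + i) + j)) ` {..<r}"
    using i by (intro image_cong) (auto simp: add.assoc)
  moreover assume "r \<ge> 1"
  then have "n + i + r \<le> length xs" using i by simp
  then have "(\<lambda>j. xs ! ((n + i) + j)) ` {..<r} \<in> E" using t by blast
  ultimately show "(\<lambda>j. drop n xs ! (i + j)) ` {..<r} \<in> E" by metis
qed

lemma tight_short: "length xs < r \<Longrightarrow> tight r E xs"
  unfolding tight_def by auto

lemma tight_app:
  assumes "tight r E xs" "tight r E ys" "drop a xs = take (r-1) ys" "length xs = a + (r - 1)" "r \<ge> 1"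
  shows "tight r E (take a xs @ ys)"
  unfolding tight_def
proof (intro allI impI)
  fix i assume i: "i + r \<le> length (take a xs @ ys)"
  have nth_eq: "(take a xs @ ys) ! p = xs ! p" if "p < a + (r - 1)" for p
  proof (cases "p < a")
    case True then show ?thesis using assms(4) by (simp add: nth_append)
  next
    case False
    then have "(take a xs @ ys) ! p = ys ! (p - a)" using assms(4) by (simp add: nth_append)
    also have "\<dots> = take (r-1) ys ! (p - a)" using that False by simp
    also have "\<dots> = drop a xs ! (p - a)" using assms(3) by simp
    also have "\<dots> = xs ! p" using False assms(4) that by simp
    finally show ?thesis .
  qed
  show "(\<lambda>j. (take a xs @ ys) ! (i + j)) ` {..<r} \<in> E"
  proof (cases "i < a")
    case True
    have "(\<lambda>j. (take a xs @ ys) ! (i + j)) ` {..<r} = (\<lambda>j. xs ! (i + j)) ` {..<r}"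
      using True assms(5) by (intro image_cong) (auto intro!: nth_eq)
    then show ?thesis using assms(1) True assms(4,5) unfolding tight_def by auto
  next
    case False
    have "(\<lambda>j. (take a xs @ ys) ! (i + j)) ` {..<r} = (\<lambda>j. ys ! ((i - a) + j)) ` {..<r}"
      using False assms(4) by (intro image_cong) (auto simp: nth_append)
    moreover have "(i - a) + r \<le> length ys" using i False by simp
    then have "(\<lambda>j. ys ! ((i - a) + j)) ` {..<r} \<in> E"
      using assms(2) unfolding tight_def by blast
    ultimately show ?thesis by metis
  qed
qed

lemma reach_len: "reach r E t u v \<Longrightarrow> length u = r - 1 \<and> length v = r - 1"
  unfolding reach_def by auto

lemma reach_trans:
  assumes "reach r E a u v" "reach r E b v w" "r \<ge> 1"
  shows "reach r E (a + b) u w"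
proof -
  obtain xs where xs: "length xs = a + (r - 1)" "tight r E xs" "take (r-1) xs = u" "drop a xs = v"
    using assms(1) unfolding reach_def by blast
  obtain ys where ys: "length ys = b + (r - 1)" "tight r E ys" "take (r-1) ys = v" "drop b ys = w"
    using assms(2) unfolding reach_def by blast
  let ?zs = "take a xs @ ys"
  have "tight r E ?zs" using tight_app[OF xs(2) ys(2) _ xs(1) assms(3)] xs(4) ys(3) by simp
  moreover have "length ?zs = (a + b) + (r - 1)" using xs ys by simp
  moreover have "take (r-1) ?zs = u"
  proof -
    have "xs = take a xs @ take (r-1) ys" using xs(4) ys(3) by (metis append_take_drop_id)
    then have "take (r-1) xs = take (r-1) (take a xs @ take (r - 1) ys)" by simp
    also have "\<dots> = take (r-1) ?zs" by (simp add: take_append min_def)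
    finally show ?thesis using xs(3) by simp
  qed
  moreover have "drop (a + b) ?zs = w" using xs ys by simp
  ultimately show ?thesis unfolding reach_def by blast
qed

lemma reach_split:
  assumes "reach r E (a + b) u w" "r \<ge> 1"
  shows "\<exists>v. reach r E a u v \<and> reach r E b v w"
proof -
  obtain xs where xs: "length xs = (a + b) + (r - 1)" "tight r E xs" "take (r-1) xs = u" "drop (a+b) xs = w"
    using assms(1) unfolding reach_def by blast
  let ?v = "take (r-1) (drop a xs)"
  have "reach r E a u ?v" unfolding reach_def
    apply (rule exI[of _ "take (a + (r-1)) xs"])
    using xs tight_take[OF xs(2)] by (auto simp: min_def take_drop ac_simps)
  moreover have "reach r E b ?v w" unfolding reach_def
    apply (rule exI[of _ "drop a xs"])
    using xs tight_drop[OF xs(2) assms(2)] by (auto simp: add.commute)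
  ultimately show ?thesis by blast
qed

lemma mod_image_lessThan:
  assumes "(r::nat) > 0"
  shows "(\<lambda>j. (c + j) mod r) ` {..<r} = {..<r}"
proof
  show "(\<lambda>j. (c + j) mod r) ` {..<r} \<subseteq> {..<r}" using assms by auto
  show "{..<r} \<subseteq> (\<lambda>j. (c + j) mod r) ` {..<r}"
  proof
    fix y assume y: "y \<in> {..<r}"
    let ?j = "(y + (r - c mod r)) mod r"
    have "(c + ?j) mod r = (c + (y + (r - c mod r))) mod r" by (simp add: mod_add_right_eq)
    also have "c + (y + (r - c mod r)) = (c - c mod r) + r + y"
      using assms mod_less_eq_dividend[of c r] mod_less_divisor[of r c] by linarith
    also have "((c - c mod r) + r + y) mod r = (y + (c div r + 1) * r) mod r"
      by (simp add: minus_mod_eq_mult_div algebra_simps)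
    also have "\<dots> = y mod r" by (rule mod_mult_self1)
    finally have "(c + ?j) mod r = y" using y by simp
    moreover have "?j \<in> {..<r}" using assms by simp
    ultimately show "y \<in> (\<lambda>j. (c + j) mod r) ` {..<r}" by (metis imageI)
  qed
qed

lemma reach_rot:
  assumes "reach r E 1 u v" "r \<ge> 2"
  shows "reach r E (r - 1) v u"
proof -
  obtain xs where xs: "length xs = 1 + (r - 1)" "tight r E xs" "take (r-1) xs = u" "drop 1 xs = v"
    using assms(1) unfolding reach_def by blast
  have lr: "length xs = r" using xs(1) assms(2) by simp
  have "0 + r \<le> length xs" by (simp add: lr)
  then have "(\<lambda>j. xs ! (0 + j)) ` {..<r} \<in> E" using xs(2) unfolding tight_def by blast
  then have e: "(\<lambda>j. xs ! j) ` {..<r} \<in> E" by simp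
  let ?zs = "drop 1 xs @ take (r-1) xs"
  have zs_nth: "?zs ! p = xs ! ((1 + p) mod r)" if "p < 2 * r - 2" for p
  proof (cases "p < r - 1")
    case True then show ?thesis using lr by (simp add: nth_append)
  next
    case False
    then have "(1 + p) mod r = p - (r - 1)" using that assms(2)
      by (simp add: mod_if)
    then show ?thesis using lr False that by (simp add: nth_append)
  qed
  have "tight r E ?zs" unfolding tight_def
  proof (intro allI impI)
    fix i assume i: "i + r \<le> length ?zs"
    have "(\<lambda>j. ?zs ! (i + j)) ` {..<r} = (\<lambda>j. xs ! j) ` ((\<lambda>j. (1 + i + j) mod r) ` {..<r})"
      unfolding image_image
    proof (intro image_cong refl)
      fix j assume "j \<in> {..<r}"
      then have "i + j < 2 * r - 2" using i lr assms(2) by simp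
      then show "?zs ! (i + j) = xs ! ((1 + i + j) mod r)" using zs_nth by (simp add: add.assoc)
    qed
    also have "\<dots> = (\<lambda>j. xs ! j) ` {..<r}"
    proof -
      have m: "(\<lambda>j. (1 + i + j) mod r) ` {..<r} = {..<r}"
        using mod_image_lessThan[of r "1 + i"] assms(2) by simp
      show ?thesis by (rule arg_cong[OF m])
    qed
    finally show "(\<lambda>j. ?zs ! (i + j)) ` {..<r} \<in> E" using e by simp
  qed
  moreover have "length ?zs = (r - 1) + (r - 1)" using lr by simp
  moreover have "take (r - 1) ?zs = v"
  proof -
    have ld: "length (drop 1 xs) = r - 1" using lr by simp
    show ?thesis unfolding take_append ld using xs(4) ld by simp
  qed
  moreover have "drop (r - 1) ?zs = u"
  proof -
    have ld: "length (drop 1 xs) = r - 1" using lr by simp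
    show ?thesis unfolding drop_append ld using xs(3) ld by simp
  qed
  ultimately show ?thesis unfolding reach_def by blast
qed

lemma reach_zero: "reach r E 0 u v \<Longrightarrow> u = v"
  unfolding reach_def by auto

lemma reach_zero_refl: "reach r E 0 u v \<Longrightarrow> reach r E 0 v u"
  using reach_zero by metis

lemma reach_back:
  assumes "reach r E t u v" "r \<ge> 2"
  shows "reach r E (t * (r - 1)) v u"
  using assms(1)
proof (induction t arbitrary: v)
  case 0
  then show ?case using reach_zero_refl by simp
next
  case (Suc t)
  then obtain w where w: "reach r E t u w" "reach r E 1 w v"
    using reach_split[of r E t 1 u v] assms(2) by auto
  have "reach r E (r - 1) v w" using reach_rot[OF w(2) assms(2)] .
  moreover have "reach r E (t * (r - 1)) w u" using Suc.IH[OF w(1)] .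
  ultimately have "reach r E ((r - 1) + t * (r - 1)) v u" using reach_trans assms(2) by fastforce
  then show ?case by (simp add: add.commute)
qed

lemma reach_cyc:
  assumes "reach r E 1 u v" "r \<ge> 2"
  shows "reach r E r u u"
  using reach_trans[OF assms(1) reach_rot[OF assms]] assms(2) by simp

lemma reach_pad:
  assumes "reach r E m u u" "reach r E r u u" "r \<ge> 2"
  shows "reach r E (m + c * r) u u"
proof (induction c)
  case 0 then show ?case using assms(1) by simp
next
  case (Suc c)
  have "reach r E (m + c * r + r) u u" using reach_trans[OF Suc assms(2)] assms(3) by simp
  moreover have "m + c * r + r = m + Suc c * r" by simp
  ultimately show ?case by metis
qed

lemma hom_to_reach:
  assumes "r \<ge> 2" "r < l" "is_hom (tight_cycle r l) (V, E) h"
  shows "\<exists>u. reach r E l u u"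
proof -
  define N where "N = l + (r - 1)"
  let ?xs = "map (\<lambda>i. h (i mod l)) [0..<N]"
  have edges: "(\<lambda>j. (i + j) mod l) ` {..<r} \<in> snd (tight_cycle r l)" if "i < l" for i
    unfolding tight_cycle_def snd_conv using that by blast
  have "tight r E ?xs" unfolding tight_def
  proof (intro allI impI)
    fix i assume i: "i + r \<le> length ?xs"
    then have il: "i < l" using assms(1) by (simp add: N_def)
    have "(\<lambda>j. ?xs ! (i + j)) ` {..<r} = h ` ((\<lambda>j. (i + j) mod l) ` {..<r})"
      unfolding image_image using i by (intro image_cong) auto
    also have "\<dots> \<in> E" using assms(3) edges[OF il] unfolding is_hom_def by auto
    finally show "(\<lambda>j. ?xs ! (i + j)) ` {..<r} \<in> E" .
  qed
  moreover have "drop l ?xs = take (r - 1) ?xs"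
  proof (rule nth_equalityI)
    show "length (drop l ?xs) = length (take (r - 1) ?xs)" by (simp add: N_def)
    fix j assume "j < length (drop l ?xs)"
    then have j: "j < r - 1" by (simp add: N_def)
    have lj: "l + j < N" using j by (simp add: N_def)
    have "drop l ?xs ! j = ?xs ! (l + j)" using lj by simp
    also have "\<dots> = h ((l + j) mod l)" using lj by simp
    also have "\<dots> = h (j mod l)" by simp
    also have "\<dots> = take (r - 1) ?xs ! j"
    proof -
      have jN: "j < N" using j by (simp add: N_def)
      then show ?thesis using j by simp
    qed
    finally show "drop l ?xs ! j = take (r - 1) ?xs ! j" .
  qed
  ultimately have "reach r E l (take (r - 1) ?xs) (take (r - 1) ?xs)"
    unfolding reach_def by (intro exI[of _ ?xs]) (simp add: N_def)
  then show ?thesis by blast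
qed

lemma reach_to_hom:
  assumes "r \<ge> 2" "r < l" "reach r E l u u" "\<forall>e\<in>E. e \<subseteq> V"
  shows "\<exists>f. is_hom (tight_cycle r l) (V, E) f"
proof -
  obtain xs where xs: "length xs = l + (r - 1)" "tight r E xs" "take (r-1) xs = u" "drop l xs = u"
    using assms(3) unfolding reach_def by blast
  have per: "xs ! (l + j) = xs ! j" if "j < r - 1" for j
  proof -
    have "xs ! (l + j) = drop l xs ! j" using xs(1) that by simp
    also have "\<dots> = take (r - 1) xs ! j" using xs(3,4) by simp
    also have "\<dots> = xs ! j" using that by simp
    finally show ?thesis .
  qed
  have win: "(\<lambda>j. xs ! (i + j)) ` {..<r} \<in> E" if "i < l" for i
  proof -
    have "i + r \<le> length xs" using xs(1) that assms(1) by simp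
    then show ?thesis using xs(2) unfolding tight_def by blast
  qed
  have "is_hom (tight_cycle r l) (V, E) (\<lambda>i. xs ! i)"
    unfolding is_hom_def
  proof (intro conjI ballI)
    fix v assume vin: "v \<in> fst (tight_cycle r l)"
    have fst_eq: "fst (tight_cycle r l) = {..<l}" by (simp only: tight_cycle_def fst_conv)
    have v: "v < l" using vin unfolding fst_eq by simp
    have sub: "(\<lambda>j. xs ! (v + j)) ` {..<r} \<subseteq> V" by (rule assms(4)[rule_format, OF win[OF v]])
    have mem: "xs ! v \<in> (\<lambda>j. xs ! (v + j)) ` {..<r}"
      by (rule image_eqI[where x=0]) (use assms(1) in auto)
    show "xs ! v \<in> fst (V, E)" unfolding fst_conv by (rule subsetD[OF sub mem])
  next
    fix e assume "e \<in> snd (tight_cycle r l)"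
    then obtain i where i: "i < l" and e: "e = (\<lambda>j. (i + j) mod l) ` {..<r}"
      unfolding tight_cycle_def snd_conv by blast
    have "(\<lambda>i. xs ! i) ` e = (\<lambda>j. xs ! (i + j)) ` {..<r}"
      unfolding e image_image
    proof (intro image_cong refl)
      fix j assume j: "j \<in> {..<r}"
      show "xs ! ((i + j) mod l) = xs ! (i + j)"
      proof (cases "i + j < l")
        case True then show ?thesis by simp
      next
        case False
        have jr: "j < r" using j by simp
        have "(i + j) mod l = (i + j - l) mod l" using False by (simp add: le_mod_geq)
        also have "\<dots> = i + j - l" using i jr assms(2) by simp
        finally have m: "(i + j) mod l = i + j - l" .
        have "i + j - l < r - 1" using i jr False by linarith
        then have "xs ! (l + (i + j - l)) = xs ! (i + j - l)" by (rule per)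
        then show ?thesis using m False by simp
      qed
    qed
    then show "(\<lambda>i. xs ! i) ` e \<in> snd (V, E)" using win[OF i] by simp
  qed
  then show ?thesis by blast
qed

definition sub :: "nat \<Rightarrow> 'a set set \<Rightarrow> 'a set set" where
  "sub r E = {S. card S = r - 1 \<and> (\<exists>e\<in>E. S \<subseteq> e)}"

lemma window_set:
  assumes "i + r \<le> length xs"
  shows "(\<lambda>k. xs ! (i + k)) ` {..<r} = set (take r (drop i xs))"
proof (intro equalityI subsetI)
  fix y assume "y \<in> (\<lambda>k. xs ! (i + k)) ` {..<r}"
  then obtain k where k: "k < r" "y = xs ! (i + k)" by auto
  then have "take r (drop i xs) ! k = y" "k < length (take r (drop i xs))" using assms by auto
  then show "y \<in> set (take r (drop i xs))" by (metis nth_mem)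
next
  fix y assume "y \<in> set (take r (drop i xs))"
  then obtain k where k: "k < length (take r (drop i xs))" "take r (drop i xs) ! k = y"
    by (auto simp: in_set_conv_nth)
  then have "k < r" "y = xs ! (i + k)" using assms by auto
  then show "y \<in> (\<lambda>k. xs ! (i + k)) ` {..<r}" by auto
qed

lemma tight_window:
  assumes "tight r E xs" "i + r \<le> length xs"
  shows "set (take r (drop i xs)) \<in> E"
proof -
  have "(\<lambda>k. xs ! (i + k)) ` {..<r} \<in> E" using assms(1,2) unfolding tight_def by blast
  then show ?thesis using window_set[OF assms(2)] by simp
qed

lemma window_sub:
  assumes "tight r E xs" "i + r \<le> length xs" "r \<ge> 1" "\<forall>e\<in>E. card e = r"
  shows "set (take (r - 1) (drop i xs)) \<in> sub r E \<and> set (take (r - 1) (drop (Suc i) xs)) \<in> sub r E"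
proof -
  let ?W = "take r (drop i xs)"
  have WE: "set ?W \<in> E" using tight_window[OF assms(1,2)] .
  have lW: "length ?W = r" using assms(2) by simp
  have "card (set ?W) = r" using WE assms(4) by blast
  then have dW: "distinct ?W" using lW card_distinct by metis
  have a: "take (r - 1) (drop i xs) = take (r - 1) ?W" using assms(3) by (simp add: min_def)
  have b: "take (r - 1) (drop (Suc i) xs) = drop 1 ?W"
    by (simp add: drop_take)
  have "distinct (take (r - 1) ?W)" by (rule distinct_take[OF dW])
  then have "card (set (take (r - 1) ?W)) = r - 1" using lW by (simp add: distinct_card)
  moreover have "set (take (r - 1) ?W) \<subseteq> set ?W" by (rule set_take_subset)
  moreover have "distinct (drop 1 ?W)" using dW by simp
  then have "card (set (drop 1 ?W)) = r - 1" using lW by (simp add: distinct_card)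
  moreover have "set (drop 1 ?W) \<subseteq> set ?W" by (rule set_drop_subset)
  ultimately show ?thesis unfolding sub_def a b using WE by blast
qed

lemma tight_snoc:
  assumes "tight r E xs" "length xs \<ge> r - 1" "insert x (set (drop (length xs - (r - 1)) xs)) \<in> E" "r \<ge> 1"
  shows "tight r E (xs @ [x])"
  unfolding tight_def
proof (intro allI impI)
  fix i assume i: "i + r \<le> length (xs @ [x])"
  show "(\<lambda>k. (xs @ [x]) ! (i + k)) ` {..<r} \<in> E"
  proof (cases "i + r \<le> length xs")
    case True
    have "(\<lambda>k. (xs @ [x]) ! (i + k)) ` {..<r} = (\<lambda>k. xs ! (i + k)) ` {..<r}"
      using True by (intro image_cong) (auto simp: nth_append)
    then show ?thesis using assms(1) True unfolding tight_def by metis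
  next
    case False
    then have ii: "i = length xs - (r - 1)" using i assms(4) by simp
    have "(\<lambda>k. (xs @ [x]) ! (i + k)) ` {..<r} = set (take r (drop i (xs @ [x])))"
      using window_set[OF i] .
    also have "take r (drop i (xs @ [x])) = drop i xs @ [x]"
      using ii assms(2,4) by simp
    finally show ?thesis using assms(3) ii by simp
  qed
qed

lemma delete_lemma:
  assumes "finite V" "\<forall>e\<in>E. e \<subseteq> V \<and> card e = r" "r \<ge> 1"
  shows "\<exists>E'\<subseteq>E. card (E - E') \<le> (d - 1) * card (sub r E) \<and>
           (\<forall>S \<in> sub r E'. d \<le> card {x. insert x S \<in> E'})"
  using assms(2)
proof (induction "card (sub r E)" arbitrary: E rule: less_induct)
  case less
  have "E \<subseteq> Pow V" using less.prems by auto
  then have finE: "finite E" using assms(1) finite_subset by blast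
  have finsub: "finite (sub r F)" if "\<forall>e\<in>F. e \<subseteq> V" for F :: "'a set set"
  proof -
    have "sub r F \<subseteq> Pow V" unfolding sub_def using that by auto
    then show ?thesis using assms(1) finite_subset by blast
  qed
  show ?case
  proof (cases "\<forall>S \<in> sub r E. d \<le> card {x. insert x S \<in> E}")
    case True
    then show ?thesis by (intro exI[of _ E]) auto
  next
    case False
    then obtain S where S: "S \<in> sub r E" "card {x. insert x S \<in> E} < d" by (auto simp: not_le)
    define E1 where "E1 = {e \<in> E. \<not> S \<subseteq> e}"
    have prem1: "\<forall>e\<in>E1. e \<subseteq> V \<and> card e = r" using less.prems unfolding E1_def by auto
    have "sub r E1 \<subseteq> sub r E - {S}" unfolding sub_def E1_def by auto
    moreover have fs: "finite (sub r E)" using finsub less.prems by blast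
    ultimately have "card (sub r E1) \<le> card (sub r E - {S})" using card_mono by blast
    moreover have "card (sub r E - {S}) < card (sub r E)" using card_Diff1_less[OF fs S(1)] .
    ultimately have lt: "card (sub r E1) < card (sub r E)" by linarith
    have le1: "card (sub r E1) \<le> card (sub r E) - 1"
      using lt by simp
    obtain E' where E': "E' \<subseteq> E1" "card (E1 - E') \<le> (d - 1) * card (sub r E1)"
      "\<forall>S \<in> sub r E'. d \<le> card {x. insert x S \<in> E'}"
      using less.hyps[OF lt prem1] by blast
    have "E - E1 \<subseteq> (\<lambda>x. insert x S) ` {x. insert x S \<in> E}"
    proof
      fix e assume e: "e \<in> E - E1"
      then have eE: "e \<in> E" and Se: "S \<subseteq> e" unfolding E1_def by auto
      have ce: "card e = r" using less.prems eE by auto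
      have fe: "finite e" using ce assms(3) card_ge_0_finite by force
      have cS: "card S = r - 1" using S(1) unfolding sub_def by auto
      have "card (e - S) = 1" using ce cS Se fe assms(3) by (simp add: card_Diff_subset finite_subset)
      then obtain x where x: "e - S = {x}" using card_1_singletonE by blast
      have "e = insert x S" using x Se by blast
      then show "e \<in> (\<lambda>x. insert x S) ` {x. insert x S \<in> E}" using eE by blast
    qed
    moreover have "finite {x. insert x S \<in> E}"
    proof -
      have "{x. insert x S \<in> E} \<subseteq> V" using less.prems by blast
      then show ?thesis using assms(1) finite_subset by blast
    qed
    ultimately have "card (E - E1) \<le> card {x. insert x S \<in> E}"
      using order_trans[OF card_mono[OF finite_imageI] card_image_le] by blast
    then have c1: "card (E - E1) \<le> d - 1" using S(2) by simp
    have sube: "E - E' \<subseteq> (E - E1) \<union> (E1 - E')" using E'(1) unfolding E1_def by auto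
    have "card (E - E') \<le> card ((E - E1) \<union> (E1 - E'))"
    proof (rule card_mono)
      show "finite ((E - E1) \<union> (E1 - E'))"
        by (rule finite_subset[OF _ finE]) (auto simp: E1_def)
    qed (rule sube)
    also have "\<dots> \<le> card (E - E1) + card (E1 - E')" by (rule card_Un_le)
    also have "\<dots> \<le> (d - 1) + (d - 1) * (card (sub r E) - 1)"
      using add_mono[OF c1 order_trans[OF E'(2) mult_le_mono2[OF le1]]] .
    also have "\<dots> = (d - 1) * card (sub r E)"
    proof -
      obtain c where c: "card (sub r E) = Suc c" using lt by (cases "card (sub r E)") auto
      show ?thesis unfolding c by (simp only: mult_Suc_right diff_Suc_1)
    qed
    finally show ?thesis using E'(1,3) unfolding E1_def by blast
  qed
qed

lemma tight_mono: "tight r E xs \<Longrightarrow> E \<subseteq> F \<Longrightarrow> tight r F xs"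
  unfolding tight_def by blast

lemma reach_mono: "reach r E t u v \<Longrightarrow> E \<subseteq> F \<Longrightarrow> reach r F t u v"
  unfolding reach_def using tight_mono by blast

lemma reach1_active: "reach r E 1 u v \<Longrightarrow> r \<ge> 1 \<Longrightarrow> \<exists>y. tight r E (u @ [y])"
proof -
  assume "reach r E 1 u v" "r \<ge> 1"
  then obtain xs where xs: "length xs = 1 + (r - 1)" "tight r E xs" "take (r-1) xs = u"
    unfolding reach_def by blast
  have "length (drop (r - 1) xs) = 1" using xs(1) by simp
  then obtain y ys where yy: "drop (r - 1) xs = y # ys" by (cases "drop (r - 1) xs") auto
  then have y: "drop (r - 1) xs = [y]" using \<open>length (drop (r - 1) xs) = 1\<close> by simp
  have "xs = u @ [y]" using xs(3) y by (metis append_take_drop_id)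
  then show ?thesis using xs(2) by blast
qed

definition fan :: "nat \<Rightarrow> 'a set set \<Rightarrow> 'a set \<Rightarrow> nat \<Rightarrow> 'a list \<Rightarrow> 'a list set" where
  "fan r E V j u = {w. set w \<subseteq> V \<and> length w = j \<and> tight r E (u @ w)}"

lemma fan_card:
  assumes fin: "finite V" and EV: "\<forall>e\<in>E. e \<subseteq> V \<and> card e = r" and r: "r \<ge> 2"
    and cod: "\<forall>S\<in>sub r E. d \<le> card {x. insert x S \<in> E}"
    and act: "tight r E (u @ [y])" and lu: "length u = r - 1"
  shows "d ^ j \<le> card (fan r E V j u)"
proof (induction j)
  case 0
  have "fan r E V 0 u = {[]}" unfolding fan_def using tight_short[of u r E] lu r by auto
  then show ?case by simp
next
  case (Suc j)
  let ?P = "fan r E V j u"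
  let ?S = "\<lambda>w. set (drop j (u @ w))"
  let ?X = "\<lambda>w. {x. insert x (?S w) \<in> E}"
  have finlists: "finite {w. set w \<subseteq> V \<and> length w = i}" for i
    using finite_lists_length_eq[OF fin] by simp
  have finP: "finite (fan r E V i u)" for i
    unfolding fan_def by (rule finite_subset[OF _ finlists[of i]]) auto
  have finX: "finite (?X w)" for w
  proof -
    have "?X w \<subseteq> V" using EV by blast
    then show ?thesis using fin finite_subset by blast
  qed
  have Ssub: "?S w \<in> sub r E" if w: "w \<in> ?P" for w
  proof (cases j)
    case 0
    then have "w = []" using w unfolding fan_def by auto
    have l0: "0 + r \<le> length (u @ [y])" using lu r by simp
    have r1: "r \<ge> 1" using r by simp
    have EVc: "\<forall>e\<in>E. card e = r" using EV by blast
    have h: "set (take (r - 1) (drop 0 (u @ [y]))) \<in> sub r E"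
      using conjunct1[OF window_sub[OF act l0 r1 EVc]] .
    have eq: "take (r - 1) (drop 0 (u @ [y])) = u" using lu by simp
    have "?S w = set u" using \<open>w = []\<close> 0 by simp
    then show ?thesis using h[unfolded eq] by simp
  next
    case (Suc i)
    have tw: "tight r E (u @ w)" and lw: "length w = j" using w unfolding fan_def by auto
    have "i + r \<le> length (u @ w)" using lu lw Suc r by simp
    moreover have r1: "r \<ge> 1" using r by simp
    moreover have EVc: "\<forall>e\<in>E. card e = r" using EV by blast
    ultimately have h: "set (take (r - 1) (drop (Suc i) (u @ w))) \<in> sub r E"
      using window_sub[OF tw] by blast
    have eq: "take (r - 1) (drop (Suc i) (u @ w)) = drop j (u @ w)"
      using lu lw Suc by simp
    show ?thesis using h[unfolded eq] .
  qed
  have img: "(\<lambda>(w, x). w @ [x]) ` (SIGMA w:?P. ?X w) \<subseteq> fan r E V (Suc j) u"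
  proof (rule subsetI)
    fix z assume "z \<in> (\<lambda>(w, x). w @ [x]) ` (SIGMA w:?P. ?X w)"
    then obtain w x where z: "z = w @ [x]" and w: "w \<in> ?P" and x: "x \<in> ?X w" by auto
    have tw: "tight r E (u @ w)" and lw: "length w = j" and sw: "set w \<subseteq> V"
      using w unfolding fan_def by auto
    have "x \<in> V" using x EV by blast
    moreover have "tight r E ((u @ w) @ [x])"
    proof (rule tight_snoc[OF tw])
      show "r - 1 \<le> length (u @ w)" using lu by simp
      have "length (u @ w) - (r - 1) = j" using lu lw by simp
      then show "insert x (set (drop (length (u @ w) - (r - 1)) (u @ w))) \<in> E" using x by simp
      show "r \<ge> 1" using r by simp
    qed
    ultimately show "z \<in> fan r E V (Suc j) u" using sw lw z unfolding fan_def by simp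
  qed
  have inj: "inj_on (\<lambda>(w, x). w @ [x]) (SIGMA w:?P. ?X w)"
    by (auto simp: inj_on_def)
  have "d ^ Suc j = d * d ^ j" by simp
  also have "\<dots> \<le> d * card ?P" using Suc.IH by simp
  also have "\<dots> = card ?P * d" by simp
  also have "\<dots> \<le> (\<Sum>w\<in>?P. card (?X w))"
  proof -
    have "of_nat (card ?P) * d \<le> (\<Sum>w\<in>?P. card (?X w))"
      by (rule sum_bounded_below) (use cod Ssub in blast)
    then show ?thesis by simp
  qed
  also have "\<dots> = card (SIGMA w:?P. ?X w)"
    using card_SigmaI[of ?P ?X] finP finX by simp
  also have "\<dots> = card ((\<lambda>(w, x). w @ [x]) ` (SIGMA w:?P. ?X w))"
    using card_image[OF inj] by simp
  also have "\<dots> \<le> card (fan r E V (Suc j) u)"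
    by (rule card_mono[OF finP img])
  finally show ?case .
qed

lemma fan_reach:
  assumes "w \<in> fan r E V (r - 1) u" "length u = r - 1"
  shows "reach r E (r - 1) u w"
  unfolding reach_def using assms unfolding fan_def
  by (intro exI[of _ "u @ w"]) auto

lemma main_count:
  assumes fin: "finite V" and EV: "\<forall>e\<in>E. e \<subseteq> V \<and> card e = r" and r: "r \<ge> 2"
    and cod: "\<forall>S\<in>sub r E. d \<le> card {x. insert x S \<in> E}"
    and rm: "reach r E m T T" and mr: "m mod r \<noteq> 0"
    and minimal: "\<forall>m' T'. reach r E m' T' T' \<and> m' mod r = m mod r \<longrightarrow> m \<le> m'"
  shows "m * d ^ (r - 1) \<le> r ^ 2 * card V ^ (r - 1)"
proof -
  have r1: "r \<ge> 1" using r by simp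
  have "\<forall>p. \<exists>v. p \<le> m \<longrightarrow> reach r E p T v \<and> reach r E (m - p) v T"
  proof
    fix p show "\<exists>v. p \<le> m \<longrightarrow> reach r E p T v \<and> reach r E (m - p) v T"
    proof (cases "p \<le> m")
      case True
      then have "reach r E (p + (m - p)) T T" using rm by simp
      then show ?thesis using reach_split[of r E p "m - p" T T] r1 by blast
    qed auto
  qed
  then obtain U where U: "\<And>p. p \<le> m \<Longrightarrow> reach r E p T (U p) \<and> reach r E (m - p) (U p) T"
    by metis
  have mpos: "m > 0" using mr by (cases m) auto
  have lenU: "length (U p) = r - 1" if "p \<le> m" for p using U[OF that] reach_len by blast
  have actU: "\<exists>y. tight r E (U p @ [y])" if "p < m" for p
  proof -
    have "reach r E (m - p) (U p) T" using U[of p] that by simp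
    moreover have "m - p = 1 + (m - p - 1)" using that by simp
    ultimately have "reach r E (1 + (m - p - 1)) (U p) T" by metis
    then obtain v where "reach r E 1 (U p) v" using reach_split r1 by blast
    then show ?thesis using reach1_active r1 by blast
  qed
  define s where "s = r * r"
  define J where "J = (m - 1) div s"
  define A where "A = (\<lambda>a. fan r E V (r - 1) (U (a * s)))"
  have spos: "s > 0" using r unfolding s_def by simp
  have posm: "a * s < m" if "a \<le> J" for a
  proof -
    have "a * s \<le> J * s" using that by simp
    also have "\<dots> \<le> m - 1" unfolding J_def by (simp add: div_times_less_eq_dividend)
    finally show ?thesis using mpos by simp
  qed
  have disj: "A a \<inter> A b = {}" if ab: "a < b" "b \<le> J" for a b
  proof (rule ccontr)
    assume "A a \<inter> A b \<noteq> {}"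
    then obtain w where wa: "w \<in> A a" and wb: "w \<in> A b" by blast
    let ?p = "a * s" and ?q = "b * s"
    have pq: "?p < ?q" "?q < m" using ab posm spos by auto
    have r1': "reach r E ?p T (U ?p)" using U[of ?p] pq by simp
    have pm: "?p \<le> m" using pq by linarith
    have qm: "?q \<le> m" using pq by linarith
    have r2: "reach r E (r - 1) (U ?p) w" using fan_reach[OF wa[unfolded A_def] lenU[OF pm]] .
    have "reach r E (r - 1) (U ?q) w" using fan_reach[OF wb[unfolded A_def] lenU[OF qm]] .
    then have r3: "reach r E ((r - 1) * (r - 1)) w (U ?q)" using reach_back r by blast
    have r4: "reach r E (m - ?q) (U ?q) T" using U[of ?q] pq by simp
    define m' where "m' = ?p + (r - 1) + (r - 1) * (r - 1) + (m - ?q)"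
    have "reach r E m' T T" unfolding m'_def
      using reach_trans[OF reach_trans[OF reach_trans[OF r1' r2 r1] r3 r1] r4 r1] .
    moreover have qp: "?q - ?p = ((b - a) * r) * r" unfolding s_def by (simp add: diff_mult_distrib)
    have rr: "(r - 1) + (r - 1) * (r - 1) = (r - 1) * r"
      using r1 by (metis add.commute le_add_diff_inverse2 mult.commute mult_Suc plus_1_eq_Suc)
    have eq: "m' + ((b - a) * r) * r = m + (r - 1) * r"
      using pq qp rr unfolding m'_def by linarith
    have "m' mod r = m mod r"
    proof -
      have "m' mod r = (m' + ((b - a) * r) * r) mod r" by simp
      also have "\<dots> = (m + (r - 1) * r) mod r" using eq by simp
      also have "\<dots> = m mod r" by simp
      finally show ?thesis .
    qed
    moreover have "m' < m"
    proof -
      have "1 \<le> b - a" using ab by simp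
      then have "r \<le> (b - a) * r" by simp
      then have "r * r \<le> ((b - a) * r) * r" by (rule mult_le_mono1)
      moreover have "(r - 1) * r < r * r" using r by simp
      ultimately show ?thesis using eq by linarith
    qed
    ultimately show False using minimal by fastforce
  qed
  have finlists: "finite {w. set w \<subseteq> V \<and> length w = r - 1}"
    using finite_lists_length_eq[OF fin] by simp
  have Asub: "A a \<subseteq> {w. set w \<subseteq> V \<and> length w = r - 1}" for a
    unfolding A_def fan_def by auto
  have finA: "finite (A a)" for a using finite_subset[OF Asub finlists] .
  have cardA: "d ^ (r - 1) \<le> card (A a)" if aJ: "a \<le> J" for a
  proof -
    have as: "a * s < m" using posm[OF aJ] .
    obtain y where "tight r E (U (a * s) @ [y])" using actU[OF as] by blast
    then show ?thesis unfolding A_def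
      using fan_card[OF fin EV r cod _ lenU] as by simp
  qed
  have "card {..J} * d ^ (r - 1) \<le> (\<Sum>a\<in>{..J}. card (A a))"
  proof -
    have "of_nat (card {..J}) * d ^ (r - 1) \<le> (\<Sum>a\<in>{..J}. card (A a))"
      by (rule sum_bounded_below) (use cardA in simp)
    then show ?thesis by simp
  qed
  also have "\<dots> = card (\<Union>a\<in>{..J}. A a)"
  proof (rule card_UN_disjoint[symmetric])
    show "finite {..J}" by simp
    show "\<forall>i\<in>{..J}. finite (A i)" using finA by blast
    show "\<forall>i\<in>{..J}. \<forall>j\<in>{..J}. i \<noteq> j \<longrightarrow> A i \<inter> A j = {}"
      using disj by (metis Int_commute atMost_iff linorder_neqE_nat)
  qed
  also have "\<dots> \<le> card {w. set w \<subseteq> V \<and> length w = r - 1}"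
    by (rule card_mono[OF finlists]) (use Asub in blast)
  also have "\<dots> = card V ^ (r - 1)" using card_lists_length_eq[OF fin] by simp
  finally have c: "(J + 1) * d ^ (r - 1) \<le> card V ^ (r - 1)" by simp
  have "m - 1 < s * (J + 1)"
  proof -
    have "m - 1 = s * J + (m - 1) mod s" unfolding J_def by simp
    moreover have "(m - 1) mod s < s" using spos by simp
    ultimately show ?thesis by simp
  qed
  then have "m \<le> s * (J + 1)" by simp
  then have "m * d ^ (r - 1) \<le> s * ((J + 1) * d ^ (r - 1))" by (metis mult.assoc mult_le_mono1)
  also have "\<dots> \<le> s * card V ^ (r - 1)" using c by simp
  finally show ?thesis unfolding s_def by (simp add: power2_eq_square)
qed

lemma sq_le_pow:
  assumes "(r::nat) \<ge> 2"
  shows "r ^ 2 \<le> (2 * r) ^ (r - 1)"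
proof (cases "r = 2")
  case True then show ?thesis by simp
next
  case False
  then have r3: "2 \<le> r - 1" using assms by simp
  have "r ^ 2 \<le> (2 * r) ^ 2" by (simp add: power_mono)
  also have "\<dots> \<le> (2 * r) ^ (r - 1)" by (rule power_increasing[OF r3]) (use assms in simp)
  finally show ?thesis .
qed

lemma real_part:
  fixes m n r L d :: nat
  assumes r: "r \<ge> 2" and L: "L \<ge> 1" and n: "n \<ge> 1"
    and dd: "2 * real r * real L powr (- 1 / real r) * real n \<le> real d"
    and md: "m * d ^ (r - 1) \<le> r ^ 2 * n ^ (r - 1)"
  shows "m \<le> L"
proof -
  define y where "y = real L powr (1 / real r)"
  have Lpos: "real L > 0" using L by simp
  have y1: "y \<ge> 1" unfolding y_def using L by (intro ge_one_powr_ge_zero) auto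
  then have ypos: "y > 0" by simp
  have yr: "y ^ r = real L"
  proof -
    have "y ^ r = real L powr (real r * (1 / real r))"
      unfolding y_def using Lpos by (simp add: powr_power)
    also have "real r * (1 / real r) = 1" using r by simp
    finally show ?thesis using Lpos by simp
  qed
  have neg: "real L powr (- 1 / real r) = 1 / y"
    unfolding y_def using powr_minus_divide[of "real L" "1 / real r"] by simp
  define \<delta> where "\<delta> = 2 * real r * real n / y"
  have \<delta>eq: "2 * real r * real L powr (- 1 / real r) * real n = \<delta>"
    unfolding \<delta>_def neg by simp
  have \<delta>pos: "\<delta> > 0" unfolding \<delta>_def using r n ypos by simp
  have "\<delta> ^ (r - 1) \<le> real d ^ (r - 1)"
    using dd \<delta>eq \<delta>pos by (intro power_mono) auto
  then have "real m * \<delta> ^ (r - 1) \<le> real m * real d ^ (r - 1)"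
    by (intro mult_left_mono) auto
  also have "\<dots> \<le> real r ^ 2 * real n ^ (r - 1)"
  proof -
    have "real (m * d ^ (r - 1)) \<le> real (r ^ 2 * n ^ (r - 1))" using md by (simp only: of_nat_le_iff)
    then show ?thesis by simp
  qed
  finally have A: "real m * \<delta> ^ (r - 1) \<le> real r ^ 2 * real n ^ (r - 1)" .
  have \<delta>p: "\<delta> ^ (r - 1) = (2 * real r) ^ (r - 1) * real n ^ (r - 1) / y ^ (r - 1)"
    unfolding \<delta>_def by (simp add: power_divide power_mult_distrib)
  have ypp: "y ^ (r - 1) > 0" using ypos by simp
  have npp: "real n ^ (r - 1) > 0" using n by simp
  have eq1: "\<delta> ^ (r - 1) * y ^ (r - 1) = (2 * real r) ^ (r - 1) * real n ^ (r - 1)"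
    unfolding \<delta>p using ypp ypos by simp
  have "real m * (2 * real r) ^ (r - 1) * real n ^ (r - 1) = real m * \<delta> ^ (r - 1) * y ^ (r - 1)"
    using eq1 by (metis mult.assoc)
  also have "\<dots> \<le> real r ^ 2 * real n ^ (r - 1) * y ^ (r - 1)"
    using A ypp by (intro mult_right_mono) auto
  finally have P: "real m * (2 * real r) ^ (r - 1) * real n ^ (r - 1) \<le> real r ^ 2 * real n ^ (r - 1) * y ^ (r - 1)" .
  have Eq: "real r ^ 2 * real n ^ (r - 1) * y ^ (r - 1) = (real r ^ 2 * y ^ (r - 1)) * real n ^ (r - 1)"
    by (simp only: mult.assoc mult.commute[of "real n ^ (r - 1)"])
  have Q: "(real m * (2 * real r) ^ (r - 1)) * real n ^ (r - 1) \<le> (real r ^ 2 * y ^ (r - 1)) * real n ^ (r - 1)"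
    using P unfolding Eq .
  have B: "real m * (2 * real r) ^ (r - 1) \<le> real r ^ 2 * y ^ (r - 1)"
    using iffD1[OF mult_le_cancel_right_pos[OF npp] Q] .
  have C: "real r ^ 2 \<le> (2 * real r) ^ (r - 1)"
  proof -
    have "real (r ^ 2) \<le> real ((2 * r) ^ (r - 1))" using sq_le_pow[OF r] by (simp only: of_nat_le_iff)
    then show ?thesis by simp
  qed
  have "real m * (2 * real r) ^ (r - 1) \<le> (2 * real r) ^ (r - 1) * y ^ (r - 1)"
  proof -
    have "real r ^ 2 * y ^ (r - 1) \<le> (2 * real r) ^ (r - 1) * y ^ (r - 1)"
      by (rule mult_right_mono[OF C]) (use ypp in simp)
    then show ?thesis using B by linarith
  qed
  then have "real m \<le> y ^ (r - 1)"
    using r by (simp add: mult.commute)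
  also have "\<dots> \<le> y ^ r" using y1 by (intro power_increasing) auto
  finally show ?thesis using yr by simp
qed

lemma no_edges_class_free:
  assumes "r \<ge> 1"
  shows "cycle_class_hom_free r k (V, {})"
  unfolding cycle_class_hom_free_def hom_free_def
proof (intro allI impI notI)
  fix l assume l: "r < l \<and> l mod r = k mod r"
  assume "\<exists>f. is_hom (tight_cycle r l) (V, {}) f"
  then obtain f where f: "is_hom (tight_cycle r l) (V, {}) f" by blast
  have l0: "0 < l" using l by simp
  have "(\<lambda>j. (0 + j) mod l) ` {..<r} \<in> snd (tight_cycle r l)"
    unfolding tight_cycle_def snd_conv using l0 by blast
  then show False using f unfolding is_hom_def by auto
qed

lemma k0_empty:
  assumes r: "r \<ge> 1" and EV: "\<forall>e\<in>E. e \<subseteq> V \<and> card e = r" and L: "L > r" and Lr: "L mod r = 0"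
    and hf: "hom_free (tight_cycle r L) (V, E)"
  shows "E = {}"
proof (rule ccontr)
  assume "E \<noteq> {}"
  then obtain e where e: "e \<in> E" by blast
  have ce: "card e = r" and eV: "e \<subseteq> V" using EV e by auto
  have fe: "finite e" using ce r card_ge_0_finite by force
  show False
  proof (cases "r = 1")
    case True
    then obtain x where x: "e = {x}" using ce card_1_singletonE by blast
    have "is_hom (tight_cycle r L) (V, E) (\<lambda>_. x)"
      unfolding is_hom_def
    proof (intro conjI ballI)
      fix v show "x \<in> fst (V, E)" using x eV by simp
    next
      fix e' assume "e' \<in> snd (tight_cycle r L)"
      then obtain i where "e' = (\<lambda>j. (i + j) mod L) ` {..<r}" unfolding tight_cycle_def snd_conv by blast
      moreover have "0 \<in> {..<r}" using r by simp
      ultimately have "e' \<noteq> {}" by blast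
      then have "(\<lambda>_. x) ` e' = {x}" by auto
      then show "(\<lambda>_. x) ` e' \<in> snd (V, E)" using x e by simp
    qed
    then show False using hf unfolding hom_free_def by blast
  next
    case False
    then have r2: "r \<ge> 2" using r by simp
    obtain es where es: "set es = e" "distinct es" using finite_distinct_list[OF fe] by blast
    have les: "length es = r" using distinct_card[OF es(2)] es(1) ce by simp
    have "tight r E es" unfolding tight_def
    proof (intro allI impI)
      fix i assume i: "i + r \<le> length es"
      then have "i = 0" using les by simp
      have "(\<lambda>k. es ! (i + k)) ` {..<r} = set (take r (drop i es))" using window_set[OF i] .
      also have "\<dots> = e" using \<open>i = 0\<close> les es by simp
      finally show "(\<lambda>k. es ! (i + k)) ` {..<r} \<in> E" using e by simp
    qed
    then have "reach r E 1 (take (r - 1) es) (drop 1 es)"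
      unfolding reach_def using les r by (intro exI[of _ es]) simp
    then have rr: "reach r E r (take (r - 1) es) (take (r - 1) es)" using reach_cyc r2 by blast
    have "reach r E (r + (L div r - 1) * r) (take (r - 1) es) (take (r - 1) es)"
      using reach_pad[OF rr rr r2] .
    moreover have "r + (L div r - 1) * r = L"
    proof -
      have Lq: "L = (L div r) * r" using div_mult_mod_eq[of L r] Lr by simp
      have "L div r \<ge> 1" using div_le_mono[of r L r] L r by simp
      then obtain q where q: "L div r = Suc q" by (cases "L div r") auto
      show ?thesis using Lq unfolding q by simp
    qed
    ultimately have "reach r E L (take (r - 1) es) (take (r - 1) es)" by simp
    then obtain f where "is_hom (tight_cycle r L) (V, E) f"
      using reach_to_hom[OF r2 L] EV by blast
    then show False using hf unfolding hom_free_def by blast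
  qed
qed

theorem corollary4p2:
  fixes V :: "'a set" and E :: "'a set set" and r L k :: nat
  assumes "r \<ge> 1"
    and "uniform_hgraph r (V, E)"
    and "L > r"
    and "k = L mod r"
    and "hom_free (tight_cycle r L) (V, E)"
  shows "\<exists>E' \<subseteq> E. real (card (E - E')) \<le> 2 * real r * real L powr (- 1 / real r) * real (card V) ^ r
           \<and> cycle_class_hom_free r k (V, E')"
proof -
  have fin: "finite V" and EV: "\<forall>e\<in>E. e \<subseteq> V \<and> card e = r"
    using assms(2) unfolding uniform_hgraph_def by auto
  have kr: "k < r" using assms(1,4) by simp
  define n where "n = card V"
  have RHSnn: "0 \<le> 2 * real r * real L powr (- 1 / real r) * real n ^ r" by simp
  show ?thesis
  proof (cases "k = 0")
    case True
    have "E = {}" using k0_empty[OF assms(1) EV assms(3) _ assms(5)] True assms(4) by simp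
    then show ?thesis using no_edges_class_free[OF assms(1)] RHSnn
      by (intro exI[of _ "{}"]) (simp add: n_def)
  next
    case False
    have r2: "r \<ge> 2" using kr False by simp
    have r1: "r \<ge> 1" using r2 by simp
    define \<delta> where "\<delta> = 2 * real r * real L powr (- 1 / real r) * real n"
    define d where "d = nat \<lceil>\<delta>\<rceil>"
    have \<delta>nn: "\<delta> \<ge> 0" unfolding \<delta>_def by simp
    have dd: "\<delta> \<le> real d" unfolding d_def by (rule real_nat_ceiling_ge)
    have d1: "real (d - 1) \<le> \<delta>"
    proof (cases "d = 0")
      case True then show ?thesis using \<delta>nn by simp
    next
      case False
      then have "real (d - 1) = real d - 1" by simp
      also have "real d = of_int \<lceil>\<delta>\<rceil>" unfolding d_def using \<delta>nn by simp
      finally show ?thesis by simp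
    qed
    obtain E' where E': "E' \<subseteq> E" "card (E - E') \<le> (d - 1) * card (sub r E)"
      "\<forall>S\<in>sub r E'. d \<le> card {x. insert x S \<in> E'}"
      using delete_lemma[OF fin EV r1, of d] by blast
    have subc: "card (sub r E) \<le> n ^ (r - 1)"
    proof -
      have "sub r E \<subseteq> {S. S \<subseteq> V \<and> card S = r - 1}" unfolding sub_def using EV by blast
      then have "card (sub r E) \<le> card {S. S \<subseteq> V \<and> card S = r - 1}"
        by (rule card_mono[rotated]) (use fin in simp)
      also have "\<dots> = n choose (r - 1)" unfolding n_def by (rule n_subsets[OF fin])
      also have "\<dots> \<le> n ^ (r - 1)"
      proof (cases "r - 1 \<le> n")
        case True then show ?thesis by (rule binomial_le_pow)
      next
        case False then show ?thesis by (simp add: binomial_eq_0)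
      qed
      finally show ?thesis .
    qed
    have cost: "real (card (E - E')) \<le> 2 * real r * real L powr (- 1 / real r) * real (card V) ^ r"
    proof -
      have "card (E - E') \<le> (d - 1) * n ^ (r - 1)"
        using E'(2) subc by (meson mult_le_mono2 order_trans)
      then have "real (card (E - E')) \<le> real (d - 1) * real n ^ (r - 1)"
        by (metis of_nat_le_iff of_nat_mult of_nat_power)
      also have "\<dots> \<le> \<delta> * real n ^ (r - 1)"
        using d1 by (intro mult_right_mono) auto
      also have "\<dots> = 2 * real r * real L powr (- 1 / real r) * (real n * real n ^ (r - 1))"
        unfolding \<delta>_def by (simp add: mult.assoc)
      also have "real n * real n ^ (r - 1) = real n ^ r"
        using r1 by (metis Suc_diff_le diff_Suc_1 power_Suc)
      finally show ?thesis unfolding n_def .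
    qed
    have EV': "\<forall>e\<in>E'. e \<subseteq> V \<and> card e = r" using EV E'(1) by blast
    have free: "cycle_class_hom_free r k (V, E')"
      unfolding cycle_class_hom_free_def hom_free_def
    proof (intro allI impI notI)
      fix l assume l: "r < l \<and> l mod r = k mod r"
      assume "\<exists>f. is_hom (tight_cycle r l) (V, E') f"
      then obtain f where "is_hom (tight_cycle r l) (V, E') f" by blast
      then obtain u where ru: "reach r E' l u u" using hom_to_reach[OF r2] l by blast
      define P where "P = (\<lambda>m. \<exists>T. reach r E' m T T \<and> m mod r = k)"
      have "P l" unfolding P_def using ru l kr by auto
      define m0 where "m0 = Least P"
      have "P m0" unfolding m0_def using LeastI[of P, OF \<open>P l\<close>] .
      then obtain T where rm0: "reach r E' m0 T T" and m0k: "m0 mod r = k" unfolding P_def by blast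
      have minimal: "\<forall>m' T'. reach r E' m' T' T' \<and> m' mod r = m0 mod r \<longrightarrow> m0 \<le> m'"
      proof (intro allI impI)
        fix m' T' assume "reach r E' m' T' T' \<and> m' mod r = m0 mod r"
        then have "P m'" unfolding P_def using m0k by blast
        then show "m0 \<le> m'" unfolding m0_def by (rule Least_le)
      qed
      have mr: "m0 mod r \<noteq> 0" using m0k False by simp
      have count: "m0 * d ^ (r - 1) \<le> r ^ 2 * n ^ (r - 1)"
        unfolding n_def using main_count[OF fin EV' r2 E'(3) rm0 mr minimal] .
      have m0pos: "m0 > 0" using mr by (cases m0) auto
      have "reach r E' (1 + (m0 - 1)) T T" using rm0 m0pos by simp
      then obtain v where rv: "reach r E' 1 T v" using reach_split r1 by blast
      then obtain y where ty: "tight r E' (T @ [y])" using reach1_active r1 by blast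
      have lT: "length T = r - 1" using reach_len[OF rv] by simp
      have "0 + r \<le> length (T @ [y])" using lT r1 by simp
      then have "set (take r (drop 0 (T @ [y]))) \<in> E'" by (rule tight_window[OF ty])
      moreover have "set (take r (drop 0 (T @ [y]))) = set (T @ [y])" using lT r1 by simp
      ultimately have "y \<in> V" using EV' by auto
      then have n1: "n \<ge> 1" unfolding n_def using fin by (metis One_nat_def Suc_leI card_gt_0_iff empty_iff)
      have L1: "L \<ge> 1" using assms(3) by simp
      have dd': "2 * real r * real L powr (- 1 / real r) * real n \<le> real d" using dd unfolding \<delta>_def .
      have mL: "m0 \<le> L" using real_part[OF r2 L1 n1 dd' count] .
      have rr: "reach r E' r T T" using reach_cyc[OF rv r2] .
      have "reach r E' (m0 + ((L - m0) div r) * r) T T" using reach_pad[OF rm0 rr r2] .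
      moreover have "m0 + ((L - m0) div r) * r = L"
      proof -
        have "L mod r = m0 mod r" using m0k assms(4) by simp
        then have "r dvd L - m0" using mod_eq_dvd_iff_nat[OF mL] by simp
        then have "((L - m0) div r) * r = L - m0" by simp
        then show ?thesis using mL by simp
      qed
      ultimately have "reach r E' L T T" by simp
      then have "reach r E L T T" using reach_mono E'(1) by blast
      then obtain g where "is_hom (tight_cycle r L) (V, E) g"
        using reach_to_hom[OF r2 assms(3)] EV by blast
      then show False using assms(5) unfolding hom_free_def by blast
    qed
    show ?thesis using E'(1) cost free by blast
  qed
qed

end
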